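(* Let $p,p'\ge1$ with $|p-p'|=1$, $p_{\min}=\min\{p,p'\}$, and let $S=\alpha_{(p,p')}(S')$ where $S'$ is a Sturmian word (so $a^{p_{\min}}b$ is the short block of $S$). If $X$ is a palindrome that is maximal in $S$ and $|X|_b>0$, then $X=Uba^{p_{\min}}=a^{p_{\min}}bV$ for some words $U,V$.
   Context: $\alpha_{(p,p')}$ is the morphism $a\mapsto a^pb$, $b\mapsto a^{p'}b$. A Sturmian word is a right-infinite aperiodic word over $\{a,b\}$ with exactly $n+1$ factors of each length $n$. $|X|_b$ is the number of occurrences of $b$ in $X$. A palindrome $X$ is maximal in $S$ if $lXl'$ is a factor of $S$ for some letters $l\neq l'$. *)

theory Defs
  imports Main
begin

datatype letter = a | b

definition factors_of_length :: "(nat \<Rightarrow> letter) \<Rightarrow> nat \<Rightarrow> letter list set" where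
  "factors_of_length w n = {map w [i..<i+n] | i. True}"

definition is_factor :: "letter list \<Rightarrow> (nat \<Rightarrow> letter) \<Rightarrow> bool" where
  "is_factor u w \<longleftrightarrow> (\<exists>i. u = map w [i..<i + length u])"

definition eventually_periodic :: "(nat \<Rightarrow> letter) \<Rightarrow> bool" where
  "eventually_periodic w \<longleftrightarrow> (\<exists>q>0. \<exists>N. \<forall>i\<ge>N. w (i + q) = w i)"

definition sturmian :: "(nat \<Rightarrow> letter) \<Rightarrow> bool" where
  "sturmian w \<longleftrightarrow> \<not> eventually_periodic w \<and>
     (\<forall>n. finite (factors_of_length w n) \<and> card (factors_of_length w n) = n + 1)"

fun alpha_letter :: "nat \<Rightarrow> nat \<Rightarrow> letter \<Rightarrow> letter list" where
  "alpha_letter p p' a = replicate p a @ [b]"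
| "alpha_letter p p' b = replicate p' a @ [b]"

definition alpha :: "nat \<Rightarrow> nat \<Rightarrow> letter list \<Rightarrow> letter list" where
  "alpha p p' u = concat (map (alpha_letter p p') u)"

text \<open>Image of an infinite word: since every letter image is nonempty, the image of
  the prefix of length k+1 has length > k, and all these images are prefixes of each other.\<close>
definition alpha_inf :: "nat \<Rightarrow> nat \<Rightarrow> (nat \<Rightarrow> letter) \<Rightarrow> (nat \<Rightarrow> letter)" where
  "alpha_inf p p' w = (\<lambda>k. alpha p p' (map w [0..<Suc k]) ! k)"

definition palindrome :: "letter list \<Rightarrow> bool" where
  "palindrome x \<longleftrightarrow> rev x = x"

definition maximal_palindrome :: "letter list \<Rightarrow> (nat \<Rightarrow> letter) \<Rightarrow> bool" where
  "maximal_palindrome x w \<longleftrightarrow> palindrome x \<and>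
     (\<exists>l l'. l \<noteq> l' \<and> is_factor (l # x @ [l']) w)"

definition count_b :: "letter list \<Rightarrow> nat" where
  "count_b x = length (filter (\<lambda>c. c = b) x)"

end

theory Submission
  imports Defs
begin

lemma L_Suc: "alpha p p' (map w [0..<Suc n]) = alpha p p' (map w [0..<n]) @ alpha_letter p p' (w n)"
  by (simp add: alpha_def)

lemma alpha_letter_form: "\<exists>q. alpha_letter p p' x = replicate q a @ [b] \<and> (q = p \<or> q = p')"
  by (cases x) auto

lemma L_len: "n \<le> length (alpha p p' (map w [0..<n]))"
proof (induction n)
  case 0 then show ?case by simp
next
  case (Suc n)
  obtain q where "alpha_letter p p' (w n) = replicate q a @ [b]" using alpha_letter_form by blast
  then show ?case using Suc unfolding L_Suc by simp
qed

lemma L_prefix: "n \<le> N \<Longrightarrow> \<exists>zs. alpha p p' (map w [0..<N]) = alpha p p' (map w [0..<n]) @ zs"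
proof (induction N)
  case 0 then show ?case by simp
next
  case (Suc N)
  show ?case
  proof (cases "n = Suc N")
    case True then show ?thesis by simp
  next
    case False
    then obtain zs where "alpha p p' (map w [0..<N]) = alpha p p' (map w [0..<n]) @ zs" using Suc by auto
    then show ?thesis unfolding L_Suc by simp
  qed
qed

lemma S_eq: "k < n \<Longrightarrow> alpha_inf p p' w k = alpha p p' (map w [0..<n]) ! k"
proof -
  assume "k < n"
  then obtain zs where z: "alpha p p' (map w [0..<n]) = alpha p p' (map w [0..<Suc k]) @ zs"
    using L_prefix[of "Suc k" n p p' w] by auto
  have "Suc k \<le> length (alpha p p' (map w [0..<Suc k]))" by (rule L_len)
  then show ?thesis unfolding alpha_inf_def z by (simp add: nth_append)
qed

lemma appA:
  assumes "\<forall>t<length L. L!t = a \<longrightarrow> (\<exists>d. 1\<le>d \<and> d\<le>M \<and> t+d<length L \<and> L!(t+d)=b)" "q \<le> M"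
  shows "\<forall>t<length (L @ replicate q a @ [b]). (L @ replicate q a @ [b])!t = a \<longrightarrow>
     (\<exists>d. 1\<le>d \<and> d\<le>M \<and> t+d<length (L @ replicate q a @ [b]) \<and> (L @ replicate q a @ [b])!(t+d)=b)"
proof (intro allI impI)
  fix t assume t: "t < length (L @ replicate q a @ [b])" and ta: "(L @ replicate q a @ [b])!t = a"
  show "\<exists>d. 1\<le>d \<and> d\<le>M \<and> t+d<length (L @ replicate q a @ [b]) \<and> (L @ replicate q a @ [b])!(t+d)=b"
  proof (cases "t < length L")
    case True
    then obtain d where "1\<le>d" "d\<le>M" "t+d<length L" "L!(t+d)=b" using assms(1) ta
      by (auto simp: nth_append)
    then show ?thesis by (intro exI[of _ d]) (auto simp: nth_append)
  next
    case False
    define s where "s = t - length L"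
    have ts: "t = length L + s" using False s_def by simp
    have "s \<le> q" using t ts by simp
    moreover have "s \<noteq> q" using ta ts by (auto simp: nth_append)
    ultimately have "s < q" by simp
    then show ?thesis using ts assms(2)
      by (intro exI[of _ "q - s"]) (auto simp: nth_append)
  qed
qed

lemma appB:
  assumes "\<forall>t s. t<length L \<longrightarrow> L!t=b \<longrightarrow> 1\<le>s \<longrightarrow> s\<le>m \<longrightarrow> t+s<length L \<longrightarrow> L!(t+s)=a" "m \<le> q"
  shows "\<forall>t s. t<length (L @ replicate q a @ [b]) \<longrightarrow> (L @ replicate q a @ [b])!t=b \<longrightarrow> 1\<le>s \<longrightarrow> s\<le>m
     \<longrightarrow> t+s<length (L @ replicate q a @ [b]) \<longrightarrow> (L @ replicate q a @ [b])!(t+s)=a"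
proof (intro allI impI)
  fix t s assume t: "t<length (L @ replicate q a @ [b])" and tb: "(L @ replicate q a @ [b])!t=b"
    and s: "1\<le>s" "s\<le>m" and ts: "t+s<length (L @ replicate q a @ [b])"
  show "(L @ replicate q a @ [b])!(t+s)=a"
  proof (cases "t < length L")
    case True
    show ?thesis
    proof (cases "t + s < length L")
      case True
      then show ?thesis using assms(1) \<open>t < length L\<close> tb s by (auto simp: nth_append)
    next
      case False
      define r where "r = t + s - length L"
      have "r < q" using r_def False True s assms(2) by simp
      then show ?thesis using False r_def by (auto simp: nth_append)
    qed
  next
    case False
    define r where "r = t - length L"
    have "t = length L + r" using False r_def by simp
    moreover have "r \<le> q" using t calculation by simp
    moreover have "r = q"
    proof (rule ccontr)
      assume "r \<noteq> q"
      then have "r < q" using \<open>r \<le> q\<close> by simp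
      then show False using tb \<open>t = length L + r\<close> by (auto simp: nth_append)
    qed
    ultimately show ?thesis using ts s by simp
  qed
qed

lemma L_A: "\<forall>t<length (alpha p p' (map w [0..<n])). alpha p p' (map w [0..<n])!t = a \<longrightarrow>
   (\<exists>d. 1\<le>d \<and> d\<le>max p p' \<and> t+d<length (alpha p p' (map w [0..<n])) \<and> alpha p p' (map w [0..<n])!(t+d)=b)"
proof (induction n)
  case 0 then show ?case by (simp add: alpha_def)
next
  case (Suc n)
  obtain q where q: "alpha_letter p p' (w n) = replicate q a @ [b]" "q = p \<or> q = p'"
    using alpha_letter_form by blast
  have "q \<le> max p p'" using q(2) by auto
  from appA[OF Suc this] show ?case unfolding L_Suc q(1) .
qed

lemma L_B: "\<forall>t s. t<length (alpha p p' (map w [0..<n])) \<longrightarrow> alpha p p' (map w [0..<n])!t=b \<longrightarrow> 1\<le>s \<longrightarrow> s\<le>min p p'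
     \<longrightarrow> t+s<length (alpha p p' (map w [0..<n])) \<longrightarrow> alpha p p' (map w [0..<n])!(t+s)=a"
proof (induction n)
  case 0 then show ?case by (simp add: alpha_def)
next
  case (Suc n)
  obtain q where q: "alpha_letter p p' (w n) = replicate q a @ [b]" "q = p \<or> q = p'"
    using alpha_letter_form by blast
  have "min p p' \<le> q" using q(2) by auto
  from appB[OF Suc this] show ?case unfolding L_Suc q(1) .
qed

lemma S_A: "alpha_inf p p' w t = a \<Longrightarrow> \<exists>d. 1\<le>d \<and> d\<le>max p p' \<and> alpha_inf p p' w (t+d) = b"
proof -
  assume h: "alpha_inf p p' w t = a"
  define n where "n = t + 1"
  have tl: "t < length (alpha p p' (map w [0..<n]))" using L_len[of n p p' w] n_def by simp
  have "alpha p p' (map w [0..<n]) ! t = a" using h S_eq[of t n] n_def by simp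
  then obtain d where d: "1\<le>d" "d\<le>max p p'" "t+d<length (alpha p p' (map w [0..<n]))"
     "alpha p p' (map w [0..<n])!(t+d)=b" using L_A[of p p' w n] tl by blast
  obtain zs where z: "alpha p p' (map w [0..<t+d+1]) = alpha p p' (map w [0..<n]) @ zs"
    using L_prefix[of n "t+d+1" p p' w] n_def by auto
  have "alpha_inf p p' w (t+d) = b" using S_eq[of "t+d" "t+d+1" p p' w] z d(3,4)
    by (simp add: nth_append)
  then show ?thesis using d by blast
qed

lemma S_B: "alpha_inf p p' w t = b \<Longrightarrow> 1\<le>s \<Longrightarrow> s\<le>min p p' \<Longrightarrow> alpha_inf p p' w (t+s) = a"
proof -
  assume h: "alpha_inf p p' w t = b" "1\<le>s" "s\<le>min p p'"
  define n where "n = t + s + 1"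
  have tl: "t + s < length (alpha p p' (map w [0..<n]))" using L_len[of n p p' w] n_def by simp
  have "alpha p p' (map w [0..<n]) ! t = b" using h S_eq[of t n] n_def by simp
  then have "alpha p p' (map w [0..<n]) ! (t+s) = a" using L_B[of p p' w n] tl h by auto
  then show ?thesis using S_eq[of "t+s" n] n_def by simp
qed


theorem mainTheorem6:
  fixes p p' :: nat and S' :: "nat \<Rightarrow> letter" and X :: "letter list"
  assumes "p \<ge> 1" and "p' \<ge> 1" and "p = p' + 1 \<or> p' = p + 1"
    and "sturmian S'"
    and "maximal_palindrome X (alpha_inf p p' S')"
    and "count_b X > 0"
  shows "\<exists>U V. X = U @ [b] @ replicate (min p p') a
              \<and> X = replicate (min p p') a @ [b] @ V"
proof -
  define S where "S = alpha_inf p p' S'"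
  define m where "m = min p p'"
  define n where "n = length X"
  have mx: "max p p' = m + 1" using assms(3) m_def by auto
  have pal: "rev X = X" using assms(5) by (simp add: maximal_palindrome_def palindrome_def)
  obtain l l' i where ll: "l \<noteq> l'" and fac0: "l # X @ [l'] = map (alpha_inf p p' S') [i..<i + length (l # X @ [l'])]"
    using assms(5) unfolding maximal_palindrome_def is_factor_def by metis
  have fac: "l # X @ [l'] = map S [i..<i + length (l # X @ [l'])]" using fac0 S_def by simp
  have hS: "S (i+j) = (l # X @ [l']) ! j" if "j \<le> n+1" for j
  proof -
    have "(l # X @ [l']) ! j = map S [i..<i + length (l # X @ [l'])] ! j" using fac by (rule arg_cong)
    also have "\<dots> = S (i+j)" using that n_def by (simp del: upt_Suc add: nth_map_upt)
    finally show ?thesis by simp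
  qed
  have S0: "S i = l" using hS[of 0] by simp
  have SX: "S (i+1+j) = X!j" if "j < n" for j using hS[of "Suc j"] that by (simp add: nth_append n_def)
  have Sn: "S (i+n+1) = l'" using hS[of "n+1"] by (simp add: nth_append n_def)
  define k where "k = length (takeWhile (\<lambda>c. c = a) X)"
  have "filter (\<lambda>c. c = b) X \<noteq> []" using assms(6) unfolding count_b_def by auto
  then have "b \<in> set X" by (auto simp: filter_empty_conv)
  have kn: "k < n"
  proof (rule ccontr)
    assume "\<not> k < n"
    then have "k = n" using length_takeWhile_le[of _ X] k_def n_def by (metis le_antisym not_less)
    have "takeWhile (\<lambda>c. c = a) X = take k X" unfolding k_def by (rule takeWhile_eq_take)
    then have "takeWhile (\<lambda>c. c = a) X = X" using \<open>k = n\<close> n_def by simp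
    then have "\<forall>x\<in>set X. x = a" by (simp only: takeWhile_eq_all_conv)
    then show False using \<open>b \<in> set X\<close> by auto
  qed
  have Xk: "X!k = b" using nth_length_takeWhile[of "\<lambda>c. c=a" X] kn k_def n_def by (cases "X!k") auto
  have Xj: "X!j = a" if "j < k" for j
  proof -
    have "takeWhile (\<lambda>c. c = a) X ! j = X ! j" using that k_def by (simp add: takeWhile_nth)
    moreover have "takeWhile (\<lambda>c. c = a) X ! j \<in> set (takeWhile (\<lambda>c. c = a) X)" using that k_def by simp
    ultimately show ?thesis by (metis set_takeWhileD)
  qed
  have Xr: "X!(n-1-j) = X!j" if "j < n" for j
    using that pal rev_nth[of j X] n_def by simp
  have Sa1: "S (i+1+j) = a" if "j < k" for j using SX[of j] Xj[OF that] that kn by simp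
  have Sb1: "S (i+1+k) = b" using SX[of k] Xk kn by simp
  have Sa2: "S (i+n-j) = a" if "j < k" for j
  proof -
    have "S (i+1+(n-1-j)) = X!(n-1-j)" using SX[of "n-1-j"] that kn by simp
    moreover have "i+1+(n-1-j) = i+n-j" using that kn by simp
    moreover have "X!(n-1-j) = X!j" using Xr[of j] that kn by simp
    ultimately show ?thesis using Xj[OF that] by metis
  qed
  have Sb2: "S (i+n-k) = b"
  proof -
    have "S (i+1+(n-1-k)) = X!(n-1-k)" using SX[of "n-1-k"] kn by simp
    moreover have "i+1+(n-1-k) = i+n-k" using kn by simp
    moreover have "X!(n-1-k) = X!k" using Xr[of k] kn by simp
    ultimately show ?thesis using Xk by metis
  qed
  have km: "k = m"
  proof (cases "l = b")
    case True
    then have l': "l' = a" using ll by (cases l') auto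
    have ge: "m \<le> k"
    proof (rule ccontr)
      assume "\<not> m \<le> k"
      then have "k+1 \<le> min p p'" using m_def by (auto simp: min_def split: if_splits)
      then have "alpha_inf p p' S' (i + (k+1)) = a" using S_B[of p p' S' i "k+1"] S0 True unfolding S_def by simp
      then have "S (i + (k+1)) = a" unfolding S_def .
      then show False using Sb1 by simp
    qed
    define t where "t = i+n-k+1"
    have "S t = a"
    proof (cases "k = 0")
      case True then show ?thesis using Sn l' t_def by simp
    next
      case False
      have "i+n-(k-1) = t" using t_def kn False by simp
      then show ?thesis using Sa2[of "k-1"] False by simp
    qed
    then obtain d where d: "1 \<le> d" "d \<le> m+1" "S (t+d) = b" using S_A[of p p' S' t] mx S_def by auto
    have "k < d"
    proof (rule ccontr)
      assume "\<not> k < d"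
      show False
      proof (cases "d = k")
        case True then show False using d Sn l' t_def kn by simp
      next
        case False
        then have "S (i+n-(k-d-1)) = a" using Sa2[of "k-d-1"] \<open>\<not> k < d\<close> d by simp
        moreover have "i+n-(k-d-1) = t+d" using t_def False \<open>\<not> k < d\<close> kn by simp
        ultimately show False using d by simp
      qed
    qed
    then show ?thesis using ge d by simp
  next
    case False
    then have l: "l = a" by (cases l) auto
    then have l': "l' = b" using ll by (cases l') auto
    have ge: "m \<le> k"
    proof (rule ccontr)
      assume "\<not> m \<le> k"
      then have "k+1 \<le> min p p'" using m_def by (auto simp: min_def split: if_splits)
      then have "alpha_inf p p' S' (i+n-k + (k+1)) = a" using S_B[of p p' S' "i+n-k" "k+1"] Sb2 unfolding S_def by simp
      then have "S (i+n-k + (k+1)) = a" unfolding S_def .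
      moreover have "i+n-k + (k+1) = i+n+1" using kn by simp
      ultimately show False using Sn l' by simp
    qed
    obtain d where d: "1 \<le> d" "d \<le> m+1" "S (i+d) = b" using S_A[of p p' S' i] S0 l mx S_def by auto
    have "k < d"
    proof (rule ccontr)
      assume "\<not> k < d"
      then have "d - 1 < k" using d by simp
      then have "S (i+1+(d-1)) = a" using Sa1[of "d-1"] by simp
      moreover have "i+1+(d-1) = i+d" using d by simp
      ultimately show False using d by simp
    qed
    then show ?thesis using ge d by simp
  qed
  have tk: "take k X = replicate k a"
    by (rule nth_equalityI) (use kn Xj n_def in auto)
  have X1: "X = replicate m a @ [b] @ drop (k+1) X"
    using id_take_nth_drop[of k X] kn n_def tk Xk km by simp
  have "X = rev X" using pal by simp
  also have "\<dots> = rev (replicate m a @ [b] @ drop (k+1) X)" using X1 by (rule arg_cong)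
  also have "\<dots> = rev (drop (k+1) X) @ [b] @ replicate m a" by simp
  finally have X2: "X = rev (drop (k+1) X) @ [b] @ replicate m a" .
  show ?thesis using X1 X2 m_def by blast
qed

end
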